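(* Let $x,y\in S^d$ and $0\le\theta\le\pi$. If $\langle\bar x,\bar y\rangle<\cos\theta$, then $V_\kappa[\chi_{B(x,\theta)}](y)=0$.
   Context: Here $S^d$ is the unit sphere in $\mathbb R^{d+1}$, $\kappa=(\kappa_1,\dots,\kappa_{d+1})$ with $\kappa_i\ge0$, and $V_\kappa$ is the intertwining operator for the group $\mathbb Z_2^{d+1}$, given explicitly by $$V_\kappa f(x)=c_\kappa\int_{[-1,1]^{d+1}}f(x_1t_1,\dots,x_{d+1}t_{d+1})\prod_{i=1}^{d+1}(1+t_i)(1-t_i^2)^{\kappa_i-1}\,dt,$$ with $c_\kappa$ chosen so that $V_\kappa1=1$ (if some $\kappa_i=0$, the $i$-th factor integral is replaced by the limit $\frac12[g(1)+g(-1)]$). For $z\in\mathbb R^{d+1}$, $\bar z=(|z_1|,\dots,|z_{d+1}|)$. $B(x,\theta)=\{y\in\mathbb R^{d+1}:\|y\|\le1,\langle x,y\rangle\ge\cos\theta\}$ and $\chi_E$ is the indicator of $E$. *)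

theory Defs
  imports "HOL-Probability.Probability"
begin

text \<open>One-dimensional factor of the intertwining operator: for k > 0 the normalized
  measure with density (1+t)(1-t^2)^(k-1) on [-1,1]; for k = 0 the limit
  measure (delta_1 + delta_(-1))/2.\<close>

definition kappa_norm :: "real \<Rightarrow> real" where
  "kappa_norm k = (LBINT t=-1..1. (1 + t) * (1 - t\<^sup>2) powr (k - 1))"

definition kappa_measure :: "real \<Rightarrow> real measure" where
  "kappa_measure k =
     (if k = 0 then distr (measure_pmf (pmf_of_set {-1, 1::real})) borel (\<lambda>t. t)
      else density lborel (\<lambda>t. ennreal (indicator {-1<..<1} t *
                 ((1 + t) * (1 - t\<^sup>2) powr (k - 1)) / kappa_norm k)))"

text \<open>Intertwining operator V_kappa for Z_2^(d+1), with d+1 = CARD('n).\<close>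

definition V_kappa :: "('n::finite \<Rightarrow> real) \<Rightarrow> (real^'n \<Rightarrow> real) \<Rightarrow> real^'n \<Rightarrow> real" where
  "V_kappa \<kappa> f x =
     (\<integral>t. f (\<chi> i. x $ i * t i) \<partial>(PiM UNIV (\<lambda>i. kappa_measure (\<kappa> i))))"

definition vabs :: "real^'n \<Rightarrow> real^'n" where
  "vabs z = (\<chi> i. \<bar>z $ i\<bar>)"

definition capB :: "real^'n \<Rightarrow> real \<Rightarrow> (real^'n) set" where
  "capB x \<theta> = {y. norm y \<le> 1 \<and> inner x y \<ge> cos \<theta>}"

end

theory Submission
  imports Defs
begin

lemma km_meas: "(\<lambda>t. ennreal (indicator {-1<..<1} t *
                 ((1 + t) * (1 - t\<^sup>2) powr (k - 1)) / kappa_norm k)) \<in> borel_measurable lborel"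
  by simp

lemma km_sets: "sets (kappa_measure k) = sets borel"
  unfolding kappa_measure_def by auto

lemma km_sf: "sigma_finite_measure (kappa_measure k)"
proof (cases "k = 0")
  case True
  have "prob_space (distr (measure_pmf (pmf_of_set {-1, 1::real})) borel (\<lambda>t. t))"
    by (intro measure_pmf.prob_space_distr) auto
  then show ?thesis using True unfolding kappa_measure_def
    by (simp add: prob_space_imp_sigma_finite)
next
  case False
  have "sigma_finite_measure (density lborel (\<lambda>t. ennreal (indicator {-1<..<1} t *
                 ((1 + t) * (1 - t\<^sup>2) powr (k - 1)) / kappa_norm k)))"
    using km_meas[of k] by (subst sigma_finite_measure.sigma_finite_iff_density_finite[OF sigma_finite_lborel]) auto
  then show ?thesis using False unfolding kappa_measure_def by simp
qed

lemma km_AE: "AE s in kappa_measure k. \<bar>s\<bar> \<le> 1"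
proof (cases "k = 0")
  case True
  have "AE s in measure_pmf (pmf_of_set {-1, 1::real}). \<bar>s\<bar> \<le> 1"
    using AE_measure_pmf[of "pmf_of_set {-1, 1::real}"]
    by eventually_elim auto
  then show ?thesis using True unfolding kappa_measure_def
    by simp (subst AE_distr_iff, auto)
next
  case False
  show ?thesis using False unfolding kappa_measure_def
    apply simp
    apply (subst AE_density[OF km_meas])
    apply (rule AE_I2)
    apply (auto simp: indicator_def split: if_splits)
    done
qed

theorem lemma3p2:
  fixes \<kappa> :: "'n::finite \<Rightarrow> real" and x y :: "real^'n" and \<theta> :: real
  assumes "\<And>i. \<kappa> i \<ge> 0"
    and "norm x = 1" and "norm y = 1"
    and "0 \<le> \<theta>" and "\<theta> \<le> pi"
    and "inner (vabs x) (vabs y) < cos \<theta>"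
  shows "V_kappa \<kappa> (indicator (capB x \<theta>)) y = 0"
proof -
  let ?M = "\<lambda>i. kappa_measure (\<kappa> i)"
  interpret P: product_sigma_finite ?M
    unfolding product_sigma_finite_def using km_sf by blast
  define A where "A i = (\<lambda>j. if j = i then {s::real. 1 < \<bar>s\<bar>} else UNIV)" for i :: 'n
  have null: "AE t in PiM UNIV ?M. t \<notin> PiE UNIV (A i)" for i
  proof (rule AE_not_in, rule null_setsI)
    have sA: "A i j \<in> sets (?M j)" for j
      by (auto simp: A_def km_sets)
    have z: "emeasure (?M i) (A i i) = 0"
    proof -
      have "AE s in ?M i. s \<notin> A i i" using km_AE[of "\<kappa> i"]
        by eventually_elim (auto simp: A_def)
      then show ?thesis
        by (subst (asm) AE_iff_measurable[OF sA[of i], of "\<lambda>s. s \<notin> A i i"])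
           (auto simp: sets_eq_imp_space_eq[OF km_sets])
    qed
    show "emeasure (PiM UNIV ?M) (PiE UNIV (A i)) = 0"
      using P.emeasure_PiM[of UNIV "A i", OF _ sA] z
      by (auto intro: prod_zero)
    show "PiE UNIV (A i) \<in> sets (PiM UNIV ?M)"
      using sA by (intro sets_PiM_I_finite) auto
  qed
  have "AE t in PiM UNIV ?M. \<forall>i\<in>UNIV. t \<notin> PiE UNIV (A i)"
    by (intro AE_finite_allI null) auto
  then have "AE t in PiM UNIV ?M. indicator (capB x \<theta>) (\<chi> i. y $ i * t i) = (0::real)"
  proof eventually_elim
    case (elim t)
    have b: "\<bar>t i\<bar> \<le> 1" for i
    proof (rule ccontr)
      assume "\<not> \<bar>t i\<bar> \<le> 1"
      then have "t \<in> PiE UNIV (A i)" by (auto simp: A_def PiE_def)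
      then show False using elim by auto
    qed
    have "inner x (\<chi> i. y $ i * t i) = (\<Sum>i\<in>UNIV. x $ i * (y $ i * t i))"
      by (simp add: inner_vec_def)
    also have "\<dots> \<le> (\<Sum>i\<in>UNIV. \<bar>x $ i\<bar> * \<bar>y $ i\<bar>)"
    proof (rule sum_mono)
      fix i
      have "x $ i * (y $ i * t i) \<le> \<bar>x $ i * (y $ i * t i)\<bar>" by simp
      also have "\<dots> = \<bar>x $ i\<bar> * \<bar>y $ i\<bar> * \<bar>t i\<bar>" by (simp add: abs_mult)
      also have "\<dots> \<le> \<bar>x $ i\<bar> * \<bar>y $ i\<bar>"
        using b[of i] by (simp add: mult_left_le)
      finally show "x $ i * (y $ i * t i) \<le> \<bar>x $ i\<bar> * \<bar>y $ i\<bar>" .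
    qed
    also have "\<dots> = inner (vabs x) (vabs y)"
      by (simp add: inner_vec_def vabs_def)
    finally have "inner x (\<chi> i. y $ i * t i) < cos \<theta>" using assms(6) by linarith
    then show ?case by (auto simp: capB_def indicator_def)
  qed
  then show ?thesis unfolding V_kappa_def by (rule integral_eq_zero_AE)
qed

end
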